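(* Fix $t\in\{1,\dots,M\}$, corresponding to the pair $(i,j)$ with $C_t=C_{i,j}$, and let $z^*=(x^*,y^* )\in F(\mathcal{T}_t)$ with $|K_t(z^* )|=2$. Set $$r_t=\min\{g(x_i^*,x_j^*,w_i,w_j),\ g(y_i^*,y_j^*,h_i,h_j)\},\qquad g(a,b,c,d)=\frac{|(a-b)+(c-d)/2|}{\sqrt{2}}.$$ Then every $z\in B(z^*,r_t)$ satisfies $K_t(z)\subseteq K_t(z^* )$.
   Context: Fix reals $W,H>0$, integers $N\ge N_m\ge 2$, and widths $w_i>0$, heights $h_i>0$ for $1\le i\le N_m$. Points of $\mathbb{R}^{2N}$ are written $z=(x,y)$ with $x=(x_1,\dots,x_N)$, $y=(y_1,\dots,y_N)$. For $1\le i\le N_m$ let $B_i^x=\{z: 0\le x_i\le W-w_i\}$, $B_i^y=\{z: 0\le y_i\le H-h_i\}$; for $i\neq j$ let $B_{i,j}=B_i^x\cap B_i^y\cap B_j^x\cap B_j^y$, $O^x_{i,j}=\{z: x_i+w_i\le x_j\}$, $O^y_{i,j}=\{z: y_i+h_i\le y_j\}$. Define the closed convex sets $C_{i,j,\mathsf{L}}=O^x_{i,j}\cap B_{i,j}$, $C_{i,j,\mathsf{R}}=O^x_{j,i}\cap B_{i,j}$, $C_{i,j,\mathsf{B}}=O^y_{i,j}\cap B_{i,j}$, $C_{i,j,\mathsf{A}}=O^y_{j,i}\cap B_{i,j}$ (assumed nonempty) and $C_{i,j}=C_{i,j,\mathsf{L}}\cup C_{i,j,\mathsf{R}}\cup C_{i,j,\mathsf{B}}\cup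 C_{i,j,\mathsf{A}}$. Enumerate the pairs $1\le i<j\le N_m$ by $t=1,\dots,M$ and write $C_t=C_{i,j}$, $C_{t,k}=C_{i,j,k}$. With the Euclidean norm and $\mathrm{d}(z,C)=\inf_{c\in C}\|z-c\|$: $\mathcal{P}_t(z)=\{c\in C_t:\|z-c\|=\mathrm{d}(z,C_t)\}$, $P_{t,k}(z)$ is the unique nearest point of $C_{t,k}$ to $z$; for a fixed $\lambda\in(0,2)$, $\mathcal{T}_t(z)=\{z+\lambda(p-z):p\in\mathcal{P}_t(z)\}$, $F(\mathcal{T}_t)=\{z: z\in\mathcal{T}_t(z)\}$. Active indices: $K_t(z)=\{k\in\{\mathsf{L},\mathsf{R},\mathsf{B},\mathsf{A}\}: P_{t,k}(z)\in\mathcal{P}_t(z)\}$. $B(z,r)$ is the open Euclidean ball (empty if $r=0$). *)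

theory Defs
  imports "HOL-Analysis.Analysis"
begin

text \<open>Points of R^{2N} are pairs (x,y) of vectors in real^'n, where the finite
  index type 'n has N elements. The product norm is the Euclidean norm of R^{2N}.\<close>

type_synonym 'n pt = "(real^'n) \<times> (real^'n)"

datatype side = L | R | B | A

definition BX :: "real \<Rightarrow> ('n \<Rightarrow> real) \<Rightarrow> 'n \<Rightarrow> ('n::finite) pt set" where
  "BX W w i = {z. 0 \<le> fst z $ i \<and> fst z $ i \<le> W - w i}"

definition BY :: "real \<Rightarrow> ('n \<Rightarrow> real) \<Rightarrow> 'n \<Rightarrow> ('n::finite) pt set" where
  "BY H h i = {z. 0 \<le> snd z $ i \<and> snd z $ i \<le> H - h i}"

definition Bpair :: "real \<Rightarrow> real \<Rightarrow> ('n \<Rightarrow> real) \<Rightarrow> ('n \<Rightarrow> real) \<Rightarrow> 'n \<Rightarrow> 'n \<Rightarrow> ('n::finite) pt set" where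
  "Bpair W H w h i j = BX W w i \<inter> BY H h i \<inter> BX W w j \<inter> BY H h j"

definition OX :: "('n \<Rightarrow> real) \<Rightarrow> 'n \<Rightarrow> 'n \<Rightarrow> ('n::finite) pt set" where
  "OX w i j = {z. fst z $ i + w i \<le> fst z $ j}"

definition OY :: "('n \<Rightarrow> real) \<Rightarrow> 'n \<Rightarrow> 'n \<Rightarrow> ('n::finite) pt set" where
  "OY h i j = {z. snd z $ i + h i \<le> snd z $ j}"

definition Cpiece :: "real \<Rightarrow> real \<Rightarrow> ('n \<Rightarrow> real) \<Rightarrow> ('n \<Rightarrow> real) \<Rightarrow> 'n \<Rightarrow> 'n \<Rightarrow> side \<Rightarrow> ('n::finite) pt set" where
  "Cpiece W H w h i j k = (case k of
      L \<Rightarrow> OX w i j \<inter> Bpair W H w h i j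
    | R \<Rightarrow> OX w j i \<inter> Bpair W H w h i j
    | B \<Rightarrow> OY h i j \<inter> Bpair W H w h i j
    | A \<Rightarrow> OY h j i \<inter> Bpair W H w h i j)"

definition Cpair :: "real \<Rightarrow> real \<Rightarrow> ('n \<Rightarrow> real) \<Rightarrow> ('n \<Rightarrow> real) \<Rightarrow> 'n \<Rightarrow> 'n \<Rightarrow> ('n::finite) pt set" where
  "Cpair W H w h i j = (\<Union>k. Cpiece W H w h i j k)"

definition ProjSet :: "'a::metric_space set \<Rightarrow> 'a \<Rightarrow> 'a set" where
  "ProjSet C z = {c \<in> C. dist z c = infdist z C}"

definition Top :: "real \<Rightarrow> 'a::real_normed_vector set \<Rightarrow> 'a \<Rightarrow> 'a set" where
  "Top lam C z = {z + lam *\<^sub>R (p - z) | p. p \<in> ProjSet C z}"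

definition FixT :: "real \<Rightarrow> 'a::real_normed_vector set \<Rightarrow> 'a set" where
  "FixT lam C = {z. z \<in> Top lam C z}"

definition Kact :: "real \<Rightarrow> real \<Rightarrow> ('n \<Rightarrow> real) \<Rightarrow> ('n \<Rightarrow> real) \<Rightarrow> 'n \<Rightarrow> 'n \<Rightarrow> ('n::finite) pt \<Rightarrow> side set" where
  "Kact W H w h i j z =
     {k. closest_point (Cpiece W H w h i j k) z \<in> ProjSet (Cpair W H w h i j) z}"

definition gfun :: "real \<Rightarrow> real \<Rightarrow> real \<Rightarrow> real \<Rightarrow> real" where
  "gfun a b c d = \<bar>(a - b) + (c - d) / 2\<bar> / sqrt 2"

end

theory Submission
  imports Defs
begin

lemma key_ineq:
  fixes X Us g t Q :: real
  assumes g: "g > 0" and Us: "Us \<ge> 0" and X: "X > 0" and t: "t > 0" and Q: "Q \<ge> t + Us"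
    and ball: "(X - (Us+g))^2 + Q^2 < (Us+g)^2"
  shows "t^2 < 4*g*X"
proof (rule ccontr)
  assume "\<not> ?thesis"
  hence tx: "4*g*X \<le> t^2" by simp
  have "Q^2 + X^2 < 2*(Us+g)*X" using ball by (simp add: power2_eq_square algebra_simps)
  hence Q2: "Q^2 < 2*(Us+g)*X" using zero_le_power2[of X] by linarith
  have "Q < Us + g"
  proof -
    have "Q^2 < (Us+g)^2" using ball by (smt (verit) zero_le_power2)
    thus ?thesis using Us g t Q by (smt (verit) power_mono)
  qed
  hence tg: "t < g" using Q Us by linarith
  have "(t+Us)^2 \<le> Q^2" using Q t Us by (intro power_mono) auto
  hence "(t+Us)^2 < 2*(Us+g)*X" using Q2 by linarith
  hence "4*g*(t+Us)^2 < 2*(Us+g)*(4*g*X)" using g by (simp add: mult_strict_left_mono)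
  also have "\<dots> \<le> 2*(Us+g)*t^2" using tx Us g by (intro mult_left_mono) auto
  finally have A: "2*g*(t+Us)^2 < (Us+g)*t^2" by (simp add: algebra_simps)
  have e4: "Us*t^2 \<le> g*t*Us" using Us tg t mult_left_mono[of "t*t" "g*t" Us]
    by (simp add: power2_eq_square mult.commute mult.left_commute)
  have e3: "0 \<le> g*t*Us" using g t Us by simp
  have e1: "0 < g*t^2" using g t by simp
  have e2: "0 \<le> g*Us^2" using g by simp
  have "2*g*(t+Us)^2 = 2*(g*t^2) + 2*(g*Us^2) + 4*(g*t*Us)" by (simp add: power2_eq_square algebra_simps)
  moreover have "(Us+g)*t^2 = Us*t^2 + g*t^2" by (simp add: algebra_simps)
  ultimately show False using A e1 e2 e3 e4 by linarith
qed

lemma gfun_sq: "(gfun a b c d)^2 = (a - b + (c - d)/2)^2 / 2"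
  unfolding gfun_def by (simp add: power_divide)

lemma plane_mem:
  fixes as bs W wa wb a b :: real
  assumes "wa > 0" "wb > 0" "0 \<le> as" "as + wa \<le> bs" "bs \<le> W - wb"
  defines "\<sigma> \<equiv> max wa (min (a+b) (2*W - wa - 2*wb))"
  shows "0 \<le> (\<sigma> - wa)/2 \<and> (\<sigma> - wa)/2 \<le> W - wa \<and> 0 \<le> (\<sigma> + wa)/2 \<and> (\<sigma> + wa)/2 \<le> W - wb
         \<and> (\<sigma> - wa)/2 + wa \<le> (\<sigma> + wa)/2"
  using assms unfolding \<sigma>_def by (auto simp: max_def min_def field_simps)

lemma plane_ineq:
  fixes as bs W wa wb a b pa pb :: real
  assumes wa: "wa > 0" and wb: "wb > 0" and as: "0 \<le> as" and asbs: "as + wa \<le> bs" and bs: "bs \<le> W - wb"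
    and ball: "(a-as)^2 + (b-bs)^2 < (gfun as bs wa wb)^2"
    and p: "pa \<ge> pb + wb"
  defines "\<sigma> \<equiv> max wa (min (a+b) (2*W - wa - 2*wb))"
  shows "(a - (\<sigma> - wa)/2)^2 + (b - (\<sigma> + wa)/2)^2 < (a-pa)^2 + (b-pb)^2"
proof -
  define U where "U = b - a - wa"
  define Us where "Us = bs - as - wa"
  define g where "g = (wa + wb)/2"
  define S where "S = a + b"
  define Ss where "Ss = as + bs"
  have g: "g > 0" using wa wb g_def by simp
  have Us: "Us \<ge> 0" using asbs Us_def by simp
  have ball2: "(U - Us)^2 + (S - Ss)^2 < (Us + g)^2"
  proof -
    have "2*((a-as)^2 + (b-bs)^2) < 2*(gfun as bs wa wb)^2" using ball by simp
    also have "2*(gfun as bs wa wb)^2 = (Us + g)^2"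
      unfolding gfun_sq Us_def g_def by (simp add: power2_eq_square field_simps)
    also have "2*((a-as)^2 + (b-bs)^2) = (U - Us)^2 + (S - Ss)^2"
      unfolding U_def Us_def S_def Ss_def by (simp add: power2_eq_square algebra_simps)
    finally show ?thesis .
  qed
  have Ug: "U > - g"
  proof -
    have "(U - Us)^2 < (Us + g)^2" using ball2 zero_le_power2[of "S - Ss"] by linarith
    hence "\<bar>U - Us\<bar> < \<bar>Us + g\<bar>" using power2_less_imp_less[of "\<bar>U - Us\<bar>" "\<bar>Us+g\<bar>"]
      by simp
    thus ?thesis using Us g by linarith
  qed
  have X: "U + g > 0" using Ug by simp
  have key: "(S - \<sigma>)^2 < 4*g*(U+g)"
  proof (cases "S < wa")
    case True
    hence "\<sigma> = wa" unfolding \<sigma>_def S_def using as asbs bs by (auto simp: max_def min_def)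
    have "(wa - S)^2 < 4*g*(U+g)"
    proof (rule key_ineq[OF g Us X])
      show "0 < wa - S" using True by simp
      show "wa - S + Us \<le> Ss - S" using as unfolding Us_def Ss_def by simp
      show "(U + g - (Us + g))^2 + (Ss - S)^2 < (Us + g)^2" using ball2 by (simp add: power2_commute)
    qed
    thus ?thesis using \<open>\<sigma> = wa\<close> by (simp add: power2_commute)
  next
    case False
    show ?thesis
    proof (cases "S > 2*W - wa - 2*wb")
      case True
      hence "\<sigma> = 2*W - wa - 2*wb" unfolding \<sigma>_def S_def using as asbs bs by (auto simp: max_def min_def)
      have "(S - (2*W - wa - 2*wb))^2 < 4*g*(U+g)"
      proof (rule key_ineq[OF g Us X])
        show "0 < S - (2*W - wa - 2*wb)" using True by simp
        show "S - (2*W - wa - 2*wb) + Us \<le> S - Ss" using bs unfolding Us_def Ss_def by simp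
        show "(U + g - (Us + g))^2 + (S - Ss)^2 < (Us + g)^2" using ball2 by simp
      qed
      thus ?thesis using \<open>\<sigma> = 2*W - wa - 2*wb\<close> by simp
    next
      case False2: False
      hence "\<sigma> = S" using False unfolding \<sigma>_def S_def by (auto simp: max_def min_def)
      thus ?thesis using g X by simp
    qed
  qed
  have "2*((a - (\<sigma> - wa)/2)^2 + (b - (\<sigma> + wa)/2)^2) = U^2 + (S - \<sigma>)^2"
    unfolding U_def S_def by (simp add: power2_eq_square field_simps)
  also have "\<dots> < U^2 + 4*g*(U+g)" using key by simp
  also have "\<dots> = (U + 2*g)^2" by (simp add: power2_eq_square algebra_simps)
  also have "\<dots> \<le> (pa - pb - (a - b))^2"
  proof -
    have "0 \<le> U + 2*g" using X g by simp
    moreover have "U + 2*g \<le> pa - pb - (a - b)" using p unfolding U_def g_def by (simp add: field_simps)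
    ultimately show ?thesis by (intro power_mono)
  qed
  also have "\<dots> \<le> 2*((a-pa)^2 + (b-pb)^2)"
    using zero_le_power2[of "(a - pa) + (b - pb)"] by (simp add: power2_eq_square algebra_simps)
  finally show ?thesis by simp
qed

lemma dist_vec_sq: "(dist (x::real^'n) y)^2 = (\<Sum>k\<in>UNIV. (x$k - y$k)^2)"
  unfolding dist_vec_def L2_set_def dist_real_def
  by (simp add: sum_nonneg)

lemma sum_split2:
  fixes f :: "'n::finite \<Rightarrow> real"
  assumes "i \<noteq> j"
  shows "sum f UNIV = f i + f j + sum f (UNIV - {i, j})"
proof -
  have "sum f UNIV = sum f (UNIV - {i,j}) + sum f {i, j}"
    by (rule sum.subset_diff) auto
  thus ?thesis using assms by simp
qed

lemma cont_fst: "continuous_on UNIV (\<lambda>z::('n::finite) pt. fst z $ i)"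
  by (intro continuous_intros)
lemma cont_snd: "continuous_on UNIV (\<lambda>z::('n::finite) pt. snd z $ i)"
  by (intro continuous_intros)

lemma closed_BX: "closed (BX W w i)"
  unfolding BX_def by (intro closed_Collect_conj closed_Collect_le cont_fst continuous_on_const)
lemma closed_BY: "closed (BY H h i)"
  unfolding BY_def by (intro closed_Collect_conj closed_Collect_le cont_snd continuous_on_const)
lemma closed_OX: "closed (OX w i j)"
  unfolding OX_def by (intro closed_Collect_le cont_fst continuous_on_add continuous_on_const)
lemma closed_OY: "closed (OY h i j)"
  unfolding OY_def by (intro closed_Collect_le cont_snd continuous_on_add continuous_on_const)
lemma closed_Bpair: "closed (Bpair W H w h i j)"
  unfolding Bpair_def by (intro closed_Int closed_BX closed_BY)
lemma closed_Cpiece: "closed (Cpiece W H w h i j k)"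
  unfolding Cpiece_def by (cases k) (simp_all add: closed_Int closed_Bpair closed_OX closed_OY)


definition upd2 :: "real^'n \<Rightarrow> 'n \<Rightarrow> 'n \<Rightarrow> real \<Rightarrow> real \<Rightarrow> real^'n" where
  "upd2 x i j a b = (\<chi> k. if k = i then a else if k = j then b else x$k)"

lemma upd2_i[simp]: "upd2 x i j a b $ i = a" by (simp add: upd2_def)
lemma upd2_j[simp]: "i \<noteq> j \<Longrightarrow> upd2 x i j a b $ j = b" by (simp add: upd2_def)

lemma dist_upd2:
  fixes x y :: "real^'n::finite"
  assumes "i \<noteq> j"
    and "(x$i - a)^2 + (x$j - b)^2 < (x$i - y$i)^2 + (x$j - y$j)^2"
  shows "dist x (upd2 y i j a b) < dist x y"
proof -
  have eq: "(\<Sum>k\<in>UNIV - {i,j}. (x$k - upd2 y i j a b $ k)^2) = (\<Sum>k\<in>UNIV - {i,j}. (x$k - y$k)^2)"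
    by (rule sum.cong) (auto simp: upd2_def)
  have "(dist x (upd2 y i j a b))^2 < (dist x y)^2"
    unfolding dist_vec_sq using assms
    by (simp add: sum_split2[OF assms(1), of "\<lambda>k. (x$k - upd2 y i j a b $ k)^2"]
        sum_split2[OF assms(1), of "\<lambda>k. (x$k - y$k)^2"] eq)
  thus ?thesis by (simp add: power_less_imp_less_base)
qed

lemma dist_ij_le:
  fixes x y :: "real^'n::finite"
  assumes "i \<noteq> j"
  shows "(x$i - y$i)^2 + (x$j - y$j)^2 \<le> (dist x y)^2"
proof -
  have "0 \<le> (\<Sum>k\<in>UNIV - {i,j}. (x$k - y$k)^2)" by (simp add: sum_nonneg)
  thus ?thesis unfolding dist_vec_sq by (simp add: sum_split2[OF assms])
qed

lemma dist_pair_sq: "(dist (p::'a::metric_space \<times> 'b::metric_space) q)^2 = (dist (fst p) (fst q))^2 + (dist (snd p) (snd q))^2"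
  by (cases p; cases q) (simp add: dist_Pair_Pair)

lemma inactive_x:
  fixes z zs :: "'n::finite pt"
  assumes wi: "w i > 0" and wj: "w j > 0" and ij: "i \<noteq> j"
    and ne: "Cpiece W H w h i j R \<noteq> {}" and zs: "zs \<in> Cpiece W H w h i j L"
    and d: "dist zs z < gfun (fst zs $ i) (fst zs $ j) (w i) (w j)"
  shows "closest_point (Cpiece W H w h i j R) z \<notin> ProjSet (Cpair W H w h i j) z"
proof
  assume P: "closest_point (Cpiece W H w h i j R) z \<in> ProjSet (Cpair W H w h i j) z"
  define p where "p = closest_point (Cpiece W H w h i j R) z"
  have pR: "p \<in> Cpiece W H w h i j R" unfolding p_def by (rule closest_point_in_set[OF closed_Cpiece ne])
  hence p1: "fst p $ j + w j \<le> fst p $ i" and pB: "p \<in> Bpair W H w h i j"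
    by (auto simp: Cpiece_def OX_def)
  from zs have zs1: "fst zs $ i + w i \<le> fst zs $ j" and zsB: "zs \<in> Bpair W H w h i j"
    by (auto simp: Cpiece_def OX_def)
  hence zs2: "0 \<le> fst zs $ i" "fst zs $ j \<le> W - w j" by (auto simp: Bpair_def BX_def)
  define \<sigma> where "\<sigma> = max (w i) (min (fst z $ i + fst z $ j) (2*W - w i - 2*w j))"
  define q where "q = (upd2 (fst p) i j ((\<sigma> - w i)/2) ((\<sigma> + w i)/2), snd p)"
  have mem: "0 \<le> (\<sigma> - w i)/2 \<and> (\<sigma> - w i)/2 \<le> W - w i \<and> 0 \<le> (\<sigma> + w i)/2 \<and> (\<sigma> + w i)/2 \<le> W - w j
         \<and> (\<sigma> - w i)/2 + w i \<le> (\<sigma> + w i)/2"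
    unfolding \<sigma>_def by (rule plane_mem[OF wi wj zs2(1) zs1 zs2(2)])
  have qL: "q \<in> Cpiece W H w h i j L"
    using mem pB ij unfolding q_def by (auto simp: Cpiece_def OX_def Bpair_def BX_def BY_def)
  hence qC: "q \<in> Cpair W H w h i j" unfolding Cpair_def by blast
  have ball: "(fst z $ i - fst zs $ i)^2 + (fst z $ j - fst zs $ j)^2 < (gfun (fst zs $ i) (fst zs $ j) (w i) (w j))^2"
  proof -
    have "(fst z $ i - fst zs $ i)^2 + (fst z $ j - fst zs $ j)^2 \<le> (dist (fst z) (fst zs))^2"
      by (rule dist_ij_le[OF ij])
    also have "\<dots> \<le> (dist z zs)^2" using dist_pair_sq[of z zs] by simp
    also have "\<dots> < (gfun (fst zs $ i) (fst zs $ j) (w i) (w j))^2"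
      using d by (simp add: dist_commute power_strict_mono)
    finally show ?thesis .
  qed
  have ineq: "(fst z $ i - (\<sigma> - w i)/2)^2 + (fst z $ j - (\<sigma> + w i)/2)^2 < (fst z $ i - fst p $ i)^2 + (fst z $ j - fst p $ j)^2"
    unfolding \<sigma>_def by (rule plane_ineq[OF wi wj zs2(1) zs1 zs2(2) ball p1])
  have "dist (fst z) (fst q) < dist (fst z) (fst p)"
    unfolding q_def using dist_upd2[OF ij ineq] by simp
  hence "(dist (fst z) (fst q))^2 < (dist (fst z) (fst p))^2"
    by (intro power_strict_mono) auto
  hence "(dist z q)^2 < (dist z p)^2"
    using dist_pair_sq[of z q] dist_pair_sq[of z p] unfolding q_def by simp
  hence "dist z q < dist z p" by (rule power2_less_imp_less) simp
  moreover have "infdist z (Cpair W H w h i j) \<le> dist z q" by (rule infdist_le[OF qC])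
  moreover have "dist z p = infdist z (Cpair W H w h i j)" using P unfolding p_def ProjSet_def by simp
  ultimately show False by simp
qed

lemma inactive_y:
  fixes z zs :: "'n::finite pt"
  assumes wi: "h i > 0" and wj: "h j > 0" and ij: "i \<noteq> j"
    and ne: "Cpiece W H w h i j A \<noteq> {}" and zs: "zs \<in> Cpiece W H w h i j B"
    and d: "dist zs z < gfun (snd zs $ i) (snd zs $ j) (h i) (h j)"
  shows "closest_point (Cpiece W H w h i j A) z \<notin> ProjSet (Cpair W H w h i j) z"
proof
  assume P: "closest_point (Cpiece W H w h i j A) z \<in> ProjSet (Cpair W H w h i j) z"
  define p where "p = closest_point (Cpiece W H w h i j A) z"
  have pR: "p \<in> Cpiece W H w h i j A" unfolding p_def by (rule closest_point_in_set[OF closed_Cpiece ne])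
  hence p1: "snd p $ j + h j \<le> snd p $ i" and pB: "p \<in> Bpair W H w h i j"
    by (auto simp: Cpiece_def OY_def)
  from zs have zs1: "snd zs $ i + h i \<le> snd zs $ j" and zsB: "zs \<in> Bpair W H w h i j"
    by (auto simp: Cpiece_def OY_def)
  hence zs2: "0 \<le> snd zs $ i" "snd zs $ j \<le> H - h j" by (auto simp: Bpair_def BY_def)
  define \<sigma> where "\<sigma> = max (h i) (min (snd z $ i + snd z $ j) (2*H - h i - 2*h j))"
  define q where "q = (fst p, upd2 (snd p) i j ((\<sigma> - h i)/2) ((\<sigma> + h i)/2))"
  have mem: "0 \<le> (\<sigma> - h i)/2 \<and> (\<sigma> - h i)/2 \<le> H - h i \<and> 0 \<le> (\<sigma> + h i)/2 \<and> (\<sigma> + h i)/2 \<le> H - h j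
         \<and> (\<sigma> - h i)/2 + h i \<le> (\<sigma> + h i)/2"
    unfolding \<sigma>_def by (rule plane_mem[OF wi wj zs2(1) zs1 zs2(2)])
  have qL: "q \<in> Cpiece W H w h i j B"
    using mem pB ij unfolding q_def by (auto simp: Cpiece_def OY_def Bpair_def BX_def BY_def)
  hence qC: "q \<in> Cpair W H w h i j" unfolding Cpair_def by blast
  have ball: "(snd z $ i - snd zs $ i)^2 + (snd z $ j - snd zs $ j)^2 < (gfun (snd zs $ i) (snd zs $ j) (h i) (h j))^2"
  proof -
    have "(snd z $ i - snd zs $ i)^2 + (snd z $ j - snd zs $ j)^2 \<le> (dist (snd z) (snd zs))^2"
      by (rule dist_ij_le[OF ij])
    also have "\<dots> \<le> (dist z zs)^2" using dist_pair_sq[of z zs] by simp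
    also have "\<dots> < (gfun (snd zs $ i) (snd zs $ j) (h i) (h j))^2"
      using d by (simp add: dist_commute power_strict_mono)
    finally show ?thesis .
  qed
  have ineq: "(snd z $ i - (\<sigma> - h i)/2)^2 + (snd z $ j - (\<sigma> + h i)/2)^2 < (snd z $ i - snd p $ i)^2 + (snd z $ j - snd p $ j)^2"
    unfolding \<sigma>_def by (rule plane_ineq[OF wi wj zs2(1) zs1 zs2(2) ball p1])
  have "dist (snd z) (snd q) < dist (snd z) (snd p)"
    unfolding q_def using dist_upd2[OF ij ineq] by simp
  hence "(dist (snd z) (snd q))^2 < (dist (snd z) (snd p))^2"
    by (intro power_strict_mono) auto
  hence "(dist z q)^2 < (dist z p)^2"
    using dist_pair_sq[of z q] dist_pair_sq[of z p] unfolding q_def by simp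
  hence "dist z q < dist z p" by (rule power2_less_imp_less) simp
  moreover have "infdist z (Cpair W H w h i j) \<le> dist z q" by (rule infdist_le[OF qC])
  moreover have "dist z p = infdist z (Cpair W H w h i j)" using P unfolding p_def ProjSet_def by simp
  ultimately show False by simp
qed

definition flip :: "side \<Rightarrow> side" where
  "flip k = (case k of L \<Rightarrow> R | R \<Rightarrow> L | B \<Rightarrow> A | A \<Rightarrow> B)"

lemma flip_flip[simp]: "flip (flip k) = k" by (cases k) (simp_all add: flip_def)

lemma Bpair_swap: "Bpair W H w h j i = Bpair W H w h i j"
  unfolding Bpair_def by blast

lemma Cpiece_swap: "Cpiece W H w h j i k = Cpiece W H w h i j (flip k)"
  by (cases k) (simp_all add: Cpiece_def flip_def Bpair_swap)

lemma Cpair_swap: "Cpair W H w h j i = Cpair W H w h i j"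
proof -
  have "(\<Union>k. Cpiece W H w h i j (flip k)) = (\<Union>k. Cpiece W H w h i j k)"
  proof (intro equalityI subsetI)
    fix x assume "x \<in> (\<Union>k. Cpiece W H w h i j (flip k))"
    thus "x \<in> (\<Union>k. Cpiece W H w h i j k)" by blast
  next
    fix x assume "x \<in> (\<Union>k. Cpiece W H w h i j k)"
    then obtain k where "x \<in> Cpiece W H w h i j k" by blast
    hence "x \<in> Cpiece W H w h i j (flip (flip k))" by simp
    thus "x \<in> (\<Union>k. Cpiece W H w h i j (flip k))" by blast
  qed
  moreover have "(\<Union>k. Cpiece W H w h j i k) = (\<Union>k. Cpiece W H w h i j (flip k))"
    by (simp only: Cpiece_swap[of W H w h j i])
  ultimately show ?thesis unfolding Cpair_def by simp
qed

lemma gfun_swap: "gfun b a d c = gfun a b c d"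
proof -
  have "(b - a) + (d - c)/2 = -((a - b) + (c - d)/2)" by (simp add: field_simps)
  thus ?thesis unfolding gfun_def by (simp only: abs_minus_cancel)
qed

lemma side_cases: "\<forall>x::side. x = L \<or> x = R \<or> x = B \<or> x = A"
  by (metis side.exhaust)

lemma card_le1:
  fixes S :: "side set"
  assumes "S \<subseteq> {k}" shows "card S \<le> 1"
  using card_mono[OF _ assms] by simp

lemma card_two:
  fixes S :: "side set"
  assumes c: "card S = 2" and n1: "\<not>(L \<in> S \<and> R \<in> S)" and n2: "\<not>(B \<in> S \<and> A \<in> S)"
  shows "(L \<in> S \<or> R \<in> S) \<and> (B \<in> S \<or> A \<in> S)"
proof (rule ccontr)
  assume "\<not> ?thesis"
  hence "(L \<notin> S \<and> R \<notin> S) \<or> (B \<notin> S \<and> A \<notin> S)" by blast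
  hence "S \<subseteq> {B} \<or> S \<subseteq> {A} \<or> S \<subseteq> {L} \<or> S \<subseteq> {R}"
  proof
    assume h: "L \<notin> S \<and> R \<notin> S"
    show ?thesis
    proof (cases "B \<in> S")
      case True
      have "S \<subseteq> {B}"
      proof
        fix x assume "x \<in> S"
        thus "x \<in> {B}" using h n2 True by (cases x) auto
      qed
      thus ?thesis by blast
    next
      case False
      have "S \<subseteq> {A}"
      proof
        fix x assume "x \<in> S"
        thus "x \<in> {A}" using h False by (cases x) auto
      qed
      thus ?thesis by blast
    qed
  next
    assume h: "B \<notin> S \<and> A \<notin> S"
    show ?thesis
    proof (cases "L \<in> S")
      case True
      have "S \<subseteq> {L}"
      proof
        fix x assume "x \<in> S"
        thus "x \<in> {L}" using h n1 True by (cases x) auto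
      qed
      thus ?thesis by blast
    next
      case False
      have "S \<subseteq> {R}"
      proof
        fix x assume "x \<in> S"
        thus "x \<in> {R}" using h False by (cases x) auto
      qed
      thus ?thesis by blast
    qed
  qed
  hence "card S \<le> 1" using card_le1 by blast
  thus False using c by simp
qed

lemma orL: "P \<or> Q \<Longrightarrow> \<not> P \<Longrightarrow> Q" by blast
lemma orR: "P \<or> Q \<Longrightarrow> \<not> Q \<Longrightarrow> P" by blast

theorem mainTheorem6:
  fixes W H lam :: real and w h :: "'n::finite \<Rightarrow> real" and i j :: 'n
    and zs :: "'n pt"
  assumes "W > 0" and "H > 0"
    and "\<And>k. w k > 0" and "\<And>k. h k > 0"
    and "i \<noteq> j"
    and "0 < lam" and "lam < 2"
    and "\<And>k. Cpiece W H w h i j k \<noteq> {}"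
    and "zs \<in> FixT lam (Cpair W H w h i j)"
    and "card (Kact W H w h i j zs) = 2"
  shows "\<forall>z \<in> ball zs
            (min (gfun (fst zs $ i) (fst zs $ j) (w i) (w j))
                 (gfun (snd zs $ i) (snd zs $ j) (h i) (h j))).
           Kact W H w h i j z \<subseteq> Kact W H w h i j zs"
proof -
  note wpos = assms(3) and hpos = assms(4) and ij = assms(5) and ne = assms(8)
  have ji: "j \<noteq> i" using ij by simp
  have zsC: "zs \<in> Cpair W H w h i j"
  proof -
    from assms(9) obtain p where e: "zs = zs + lam *\<^sub>R (p - zs)" and pP: "p \<in> ProjSet (Cpair W H w h i j) zs"
      unfolding FixT_def Top_def by blast
    from e have "lam *\<^sub>R (p - zs) = 0" by (metis add_cancel_left_right)
    hence "p = zs" using assms(6) by simp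
    thus ?thesis using pP unfolding ProjSet_def by simp
  qed
  have Kzs: "k \<in> Kact W H w h i j zs \<longleftrightarrow> zs \<in> Cpiece W H w h i j k" for k
  proof
    assume "k \<in> Kact W H w h i j zs"
    hence c: "closest_point (Cpiece W H w h i j k) zs \<in> ProjSet (Cpair W H w h i j) zs"
      unfolding Kact_def by simp
    hence "dist zs (closest_point (Cpiece W H w h i j k) zs) = 0"
      using zsC unfolding ProjSet_def by simp
    hence "closest_point (Cpiece W H w h i j k) zs = zs" by simp
    thus "zs \<in> Cpiece W H w h i j k" using closest_point_in_set[OF closed_Cpiece ne[of k]] by metis
  next
    assume "zs \<in> Cpiece W H w h i j k"
    hence "closest_point (Cpiece W H w h i j k) zs = zs" by (rule closest_point_self)
    moreover have "zs \<in> ProjSet (Cpair W H w h i j) zs" using zsC unfolding ProjSet_def by simp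
    ultimately show "k \<in> Kact W H w h i j zs" unfolding Kact_def by simp
  qed
  have nLR: "\<not> (L \<in> Kact W H w h i j zs \<and> R \<in> Kact W H w h i j zs)"
    using wpos[of i] wpos[of j] unfolding Kzs by (auto simp: Cpiece_def OX_def)
  have nBA: "\<not> (B \<in> Kact W H w h i j zs \<and> A \<in> Kact W H w h i j zs)"
    using hpos[of i] hpos[of j] unfolding Kzs by (auto simp: Cpiece_def OY_def)
  have two: "(L \<in> Kact W H w h i j zs \<or> R \<in> Kact W H w h i j zs) \<and>
             (B \<in> Kact W H w h i j zs \<or> A \<in> Kact W H w h i j zs)"
    by (rule card_two[OF assms(10) nLR nBA])
  show ?thesis
  proof (intro ballI subsetI)
    fix z k
    assume zb: "z \<in> ball zs (min (gfun (fst zs $ i) (fst zs $ j) (w i) (w j))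
                 (gfun (snd zs $ i) (snd zs $ j) (h i) (h j)))"
      and kz: "k \<in> Kact W H w h i j z"
    have dx: "dist zs z < gfun (fst zs $ i) (fst zs $ j) (w i) (w j)" using zb by simp
    have dy: "dist zs z < gfun (snd zs $ i) (snd zs $ j) (h i) (h j)" using zb by simp
    have kz': "closest_point (Cpiece W H w h i j k) z \<in> ProjSet (Cpair W H w h i j) z"
      using kz unfolding Kact_def by simp
    show "k \<in> Kact W H w h i j zs"
    proof (rule ccontr)
      assume nk: "k \<notin> Kact W H w h i j zs"
      show False
      proof (cases k)
        case L
        have "L \<notin> Kact W H w h i j zs" using nk L by simp
        hence "R \<in> Kact W H w h i j zs" by (rule orL[OF conjunct1[OF two]])
        hence "zs \<in> Cpiece W H w h i j R" using Kzs[of R] by simp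
        hence zs': "zs \<in> Cpiece W H w h j i L" using Cpiece_swap[of W H w h j i L] by (simp add: flip_def)
        have ne': "Cpiece W H w h j i R \<noteq> {}" using Cpiece_swap[of W H w h j i R] ne[of L] by (simp add: flip_def)
        have "closest_point (Cpiece W H w h j i R) z \<notin> ProjSet (Cpair W H w h j i) z"
          by (rule inactive_x[OF wpos wpos ji ne' zs']) (simp add: gfun_swap dx)
        thus False using kz' L Cpiece_swap[of W H w h j i R] Cpair_swap[of W H w h j i] by (simp add: flip_def)
      next
        case R
        have "R \<notin> Kact W H w h i j zs" using nk R by simp
        hence "L \<in> Kact W H w h i j zs" by (rule orR[OF conjunct1[OF two]])
        hence "zs \<in> Cpiece W H w h i j L" using Kzs[of L] by simp
        have "closest_point (Cpiece W H w h i j R) z \<notin> ProjSet (Cpair W H w h i j) z"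
          by (rule inactive_x[OF wpos wpos ij ne \<open>zs \<in> Cpiece W H w h i j L\<close> dx])
        thus False using kz' R by simp
      next
        case B
        have "B \<notin> Kact W H w h i j zs" using nk B by simp
        hence "A \<in> Kact W H w h i j zs" by (rule orL[OF conjunct2[OF two]])
        hence "zs \<in> Cpiece W H w h i j A" using Kzs[of A] by simp
        hence zs': "zs \<in> Cpiece W H w h j i B" using Cpiece_swap[of W H w h j i B] by (simp add: flip_def)
        have ne': "Cpiece W H w h j i A \<noteq> {}" using Cpiece_swap[of W H w h j i A] ne[of B] by (simp add: flip_def)
        have "closest_point (Cpiece W H w h j i A) z \<notin> ProjSet (Cpair W H w h j i) z"
          by (rule inactive_y[OF hpos hpos ji ne' zs']) (simp add: gfun_swap dy)
        thus False using kz' B Cpiece_swap[of W H w h j i A] Cpair_swap[of W H w h j i] by (simp add: flip_def)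
      next
        case A
        have "A \<notin> Kact W H w h i j zs" using nk A by simp
        hence "B \<in> Kact W H w h i j zs" by (rule orR[OF conjunct2[OF two]])
        hence "zs \<in> Cpiece W H w h i j B" using Kzs[of B] by simp
        have "closest_point (Cpiece W H w h i j A) z \<notin> ProjSet (Cpair W H w h i j) z"
          by (rule inactive_y[OF hpos hpos ij ne \<open>zs \<in> Cpiece W H w h i j B\<close> dy])
        thus False using kz' A by simp
      qed
    qed
  qed
qed

end
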